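(* Let $(R,\mathfrak{m})$ be a commutative Artinian local ring with identity, $\mathfrak{m}\neq0$ and $\mathfrak{m}^2=0$. In $R[x]$: $L(x)=\{1\}$, $L(x^2)=\{2\}$, $L(x^3)=\{3\}$, $L(x^4)=\{2,4\}$, and $L(x^5)=\{3,5\}$.
   Context: A nonunit polynomial in $R[x]$ is irreducible if in any factorization into two polynomials one factor is a unit of $R[x]$. A positive integer $k$ is a length of $f$ if $f$ is a product of $k$ irreducible polynomials of $R[x]$; $L(f)$ denotes the set of lengths of $f$. *)

theory Defs
  imports "HOL-Computational_Algebra.Polynomial" "HOL-Computational_Algebra.Factorial_Ring"
begin

definition is_ideal :: "'a::comm_ring_1 set \<Rightarrow> bool" where
  "is_ideal I \<longleftrightarrow> 0 \<in> I \<and> (\<forall>a\<in>I. \<forall>b\<in>I. a + b \<in> I) \<and> (\<forall>r. \<forall>a\<in>I. r * a \<in> I)"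

definition maximal_ideal :: "'a::comm_ring_1 set \<Rightarrow> bool" where
  "maximal_ideal M \<longleftrightarrow> is_ideal M \<and> M \<noteq> UNIV \<and>
     (\<forall>J. is_ideal J \<and> M \<subseteq> J \<longrightarrow> J = M \<or> J = UNIV)"

definition artinian_ring :: "'a::comm_ring_1 itself \<Rightarrow> bool" where
  "artinian_ring _ \<longleftrightarrow> (\<forall>f :: nat \<Rightarrow> 'a set. (\<forall>n. is_ideal (f n)) \<and> (\<forall>n. f (Suc n) \<subseteq> f n)
       \<longrightarrow> (\<exists>N. \<forall>n\<ge>N. f n = f N))"

definition local_ring :: "'a::comm_ring_1 itself \<Rightarrow> bool" where
  "local_ring _ \<longleftrightarrow> (\<exists>!M :: 'a set. maximal_ideal M)"

definition max_ideal :: "'a::comm_ring_1 itself \<Rightarrow> 'a set" where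
  "max_ideal _ = (THE M :: 'a set. maximal_ideal M)"

definition lengths :: "'a::comm_ring_1 poly \<Rightarrow> nat set" where
  "lengths f = {k. k > 0 \<and> (\<exists>ps :: 'a poly list. length ps = k \<and>
       (\<forall>p\<in>set ps. irreducible p) \<and> prod_list ps = f)}"

end

theory Submission
  imports Defs
begin

lemma aux: fixes X :: "'b::comm_ring_1" assumes "X*Y=1" "H*H=0" shows "(X+H)*(Y*(1-Y*H)) = 1"
proof -
  have "(X+H)*(Y*(1-Y*H)) = X*Y - X*Y*Y*H + Y*H - Y*Y*(H*H)" by (simp add: algebra_simps)
  then show ?thesis using assms by simp
qed

lemma len2: "length ps = 2 \<Longrightarrow> ps = [ps!0, ps!1]"
  by (auto simp: length_Suc_conv numeral_2_eq_2)
lemma len3: "length ps = 3 \<Longrightarrow> ps = [ps!0, ps!1, ps!2]"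
  by (auto simp: length_Suc_conv numeral_3_eq_3)
lemma len4: "length ps = 4 \<Longrightarrow> ps = [ps!0, ps!1, ps!2, ps!3]"
  by (auto simp: length_Suc_conv numeral_eq_Suc)
lemma len1: "length ps = 1 \<Longrightarrow> ps = [ps!0]"
  by (auto simp: length_Suc_conv)

locale lr = fixes M :: "'a::comm_ring_1 set"
  assumes ideal: "is_ideal M" and one_notin: "1 \<notin> M"
    and units: "\<And>a. a \<notin> M \<Longrightarrow> a dvd 1"
    and sq: "\<And>a b. a \<in> M \<Longrightarrow> b \<in> M \<Longrightarrow> a * b = 0"
begin

lemma zero_in[simp]: "0 \<in> M" using ideal unfolding is_ideal_def by blast
lemma add_in: "a \<in> M \<Longrightarrow> b \<in> M \<Longrightarrow> a + b \<in> M" using ideal unfolding is_ideal_def by blast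
lemma mult_inL: "a \<in> M \<Longrightarrow> r * a \<in> M" using ideal unfolding is_ideal_def by blast
lemma mult_inR: "a \<in> M \<Longrightarrow> a * r \<in> M" using mult_inL[of a r] by (simp add: mult.commute)
lemma neg_in: "a \<in> M \<Longrightarrow> - a \<in> M" using mult_inL[of a "-1"] by simp
lemma diff_in: "a \<in> M \<Longrightarrow> b \<in> M \<Longrightarrow> a - b \<in> M" using add_in[of a "-b"] neg_in by simp
lemma unit_notin: "u dvd 1 \<Longrightarrow> u \<notin> M"
  using one_notin mult_inR by (auto elim!: dvdE) (metis mult_inR)
lemma notin_mult: "a \<notin> M \<Longrightarrow> b \<notin> M \<Longrightarrow> a * b \<notin> M"
proof -
  assume "a \<notin> M" "b \<notin> M"
  then have "a * b dvd 1 * 1" using units by (intro mult_dvd_mono) auto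
  then show ?thesis using unit_notin by simp
qed
lemma notin_add: "a \<notin> M \<Longrightarrow> b \<in> M \<Longrightarrow> a + b \<notin> M"
  using diff_in[of "a+b" b] by auto
lemma sum_in: "(\<And>i. i \<in> A \<Longrightarrow> h i \<in> M) \<Longrightarrow> sum h A \<in> M"
proof (induction A rule: infinite_finite_induct)
  case (insert x F) then show ?case by (simp add: add_in)
qed auto
lemma sum_one_out: assumes "finite A" "k \<in> A" "h k \<notin> M" "\<And>i. i \<in> A \<Longrightarrow> i \<noteq> k \<Longrightarrow> h i \<in> M"
  shows "sum h A \<notin> M"
proof -
  have "sum h A = h k + sum h (A - {k})" using assms(1,2) by (simp add: sum.remove)
  moreover have "sum h (A - {k}) \<in> M" by (rule sum_in) (use assms(4) in auto)
  ultimately show ?thesis using notin_add assms(3) by simp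
qed

definition ordp :: "nat \<Rightarrow> 'a poly \<Rightarrow> bool" where
  "ordp e f \<longleftrightarrow> coeff f e \<notin> M \<and> (\<forall>i. i \<noteq> e \<longrightarrow> coeff f i \<in> M)"

lemma ordp_unique: "ordp a f \<Longrightarrow> ordp b f \<Longrightarrow> a = b"
  unfolding ordp_def by blast

lemma ordp_mult: assumes f: "ordp a f" and g: "ordp b g" shows "ordp (a+b) (f*g)"
  unfolding ordp_def coeff_mult
proof (intro conjI allI impI)
  show "(\<Sum>i\<le>a + b. coeff f i * coeff g (a + b - i)) \<notin> M"
    by (rule sum_one_out[where k=a]) (use f g notin_mult in \<open>auto simp: ordp_def intro: mult_inR\<close>)
next
  fix n assume "n \<noteq> a + b"
  then show "(\<Sum>i\<le>n. coeff f i * coeff g (n - i)) \<in> M"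
    using f g unfolding ordp_def
    by (intro sum_in) (metis mult_inL mult_inR add_diff_inverse_nat atMost_iff le_add_diff_inverse nat_le_linear)
qed

lemma allM_zero: assumes "\<And>i. coeff h i \<in> M" "\<And>i. coeff k i \<in> M" shows "h * k = 0"
proof (rule poly_eqI)
  fix n show "coeff (h*k) n = coeff 0 n" unfolding coeff_mult using assms sq by simp
qed


lemma key: assumes "coeff f i \<notin> M" "coeff g j \<notin> M"
  "\<And>i'. i' \<le> i + j \<Longrightarrow> i' \<noteq> i \<Longrightarrow> coeff f i' \<in> M \<or> coeff g (i+j-i') \<in> M"
  shows "coeff (f*g) (i+j) \<notin> M"
  unfolding coeff_mult
  by (rule sum_one_out[where k=i]) (use assms notin_mult in \<open>auto intro: mult_inL mult_inR\<close>, metis mult_inL mult_inR assms(3))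

lemma exists_notin: assumes "f * g = F" "ordp n F" shows "\<exists>i. coeff f i \<notin> M"
proof (rule ccontr)
  assume "\<not> ?thesis"
  then have "coeff F n \<in> M" unfolding assms(1)[symmetric] coeff_mult
    by (intro sum_in) (auto intro: mult_inR)
  then show False using assms(2) by (simp add: ordp_def)
qed

lemma ordp_factor: assumes fg: "f * g = F" and F: "ordp n F" shows "\<exists>a b. ordp a f \<and> ordp b g"
proof -
  define P where "P = (\<lambda>i. coeff f i \<notin> M)"
  define Q where "Q = (\<lambda>i. coeff g i \<notin> M)"
  obtain i where i: "P i" using exists_notin[OF fg F] P_def by auto
  have gf: "g * f = F" using fg by (simp add: mult.commute)
  obtain j where j: "Q j" using exists_notin[OF gf F] Q_def by auto
  have bP: "\<And>y. P y \<Longrightarrow> y \<le> degree f" unfolding P_def using coeff_eq_0 le_less_linear zero_in by metis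
  have bQ: "\<And>y. Q y \<Longrightarrow> y \<le> degree g" unfolding Q_def using coeff_eq_0 le_less_linear zero_in by metis
  define i0 where "i0 = (LEAST i. P i)"
  define j0 where "j0 = (LEAST i. Q i)"
  define i1 where "i1 = (GREATEST i. P i)"
  define j1 where "j1 = (GREATEST i. Q i)"
  have Pi0: "P i0" unfolding i0_def by (rule LeastI[of P, OF i])
  have Qj0: "Q j0" unfolding j0_def by (rule LeastI[of Q, OF j])
  have Pi1: "P i1" unfolding i1_def by (rule GreatestI_nat[of P, OF i bP])
  have Qj1: "Q j1" unfolding j1_def by (rule GreatestI_nat[of Q, OF j bQ])
  have li: "\<And>k. P k \<Longrightarrow> i0 \<le> k" unfolding i0_def by (rule Least_le)
  have lj: "\<And>k. Q k \<Longrightarrow> j0 \<le> k" unfolding j0_def by (rule Least_le)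
  have gi: "\<And>k. P k \<Longrightarrow> k \<le> i1" unfolding i1_def by (rule Greatest_le_nat[OF _ bP])
  have gj: "\<And>k. Q k \<Longrightarrow> k \<le> j1" unfolding j1_def by (rule Greatest_le_nat[OF _ bQ])
  have "coeff F (i0+j0) \<notin> M" unfolding fg[symmetric]
  proof (rule key)
    fix i' assume "i' \<le> i0 + j0" "i' \<noteq> i0"
    then show "coeff f i' \<in> M \<or> coeff g (i0 + j0 - i') \<in> M"
      using li lj unfolding P_def Q_def
      by (metis add_diff_cancel_left' diff_less_mono2 le_add1 le_add_diff_inverse linorder_neqE_nat not_le)
  qed (use Pi0 Qj0 P_def Q_def in auto)
  then have e0: "i0 + j0 = n" using F unfolding ordp_def by blast
  have "coeff F (i1+j1) \<notin> M" unfolding fg[symmetric]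
  proof (rule key)
    fix i' assume "i' \<le> i1 + j1" "i' \<noteq> i1"
    then show "coeff f i' \<in> M \<or> coeff g (i1 + j1 - i') \<in> M"
      using gi gj unfolding P_def Q_def
      by (metis add_diff_cancel_left' diff_less_mono2 le_add1 le_add_diff_inverse linorder_neqE_nat not_le)
  qed (use Pi1 Qj1 P_def Q_def in auto)
  then have e1: "i1 + j1 = n" using F unfolding ordp_def by blast
  have "i0 \<le> i1" "j0 \<le> j1" using li lj Pi1 Qj1 by auto
  then have "i0 = i1" "j0 = j1" using e0 e1 by auto
  then have "ordp i0 f" "ordp j0 g" unfolding ordp_def using li gi lj gj Pi0 Qj0 P_def Q_def
    by (metis le_antisym)+
  then show ?thesis by blast
qed


lemma ordp0_unit: assumes "ordp 0 f" shows "f dvd 1"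
proof -
  define c where "c = coeff f 0"
  have "c \<notin> M" using assms c_def ordp_def by auto
  then obtain c' where cc': "c * c' = 1" using units by (metis dvdE)
  define h where "h = f - [:c:]"
  have hM: "\<And>i. coeff h i \<in> M" using assms unfolding h_def ordp_def c_def
    by (case_tac i) auto
  have hh: "h * h = 0" by (rule allM_zero) (use hM in auto)
  have cc: "[:c:] * [:c':] = 1" using cc' by (simp add: one_pCons mult.commute)
  have f: "f = [:c:] + h" unfolding h_def by simp
  have "f * ([:c':] * (1 - [:c':] * h)) = 1"
    unfolding f by (rule aux[OF cc hh])
  then show ?thesis by (metis dvdI)
qed

lemma ordp_one: "ordp 0 (1 :: 'a poly)"
  unfolding ordp_def using one_notin by (auto simp: coeff_1)

lemma unit_ordp0: assumes "f dvd 1" shows "ordp 0 f"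
proof -
  from assms obtain g where fg: "1 = f * g" by (rule dvdE)
  obtain a b where ab: "ordp a f" "ordp b g" using ordp_factor[OF fg[symmetric] ordp_one] by blast
  have "ordp (a+b) 1" using ordp_mult[OF ab] fg by simp
  then have "a + b = 0" using ordp_one ordp_unique by blast
  then show ?thesis using ab by simp
qed

lemma ordp_nonunit: assumes "ordp e f" "e > 0" shows "\<not> f dvd 1"
proof
  assume "f dvd 1"
  then have "ordp 0 f" by (rule unit_ordp0)
  then have "e = 0" using assms(1) ordp_unique by blast
  then show False using assms(2) by simp
qed

lemma ordp_nonzero: "ordp e f \<Longrightarrow> f \<noteq> 0"
  unfolding ordp_def by auto

lemma ordp_irred1: assumes "ordp 1 f" shows "irreducible f"
  unfolding irreducible_def
proof (intro conjI allI impI)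
  show "f \<noteq> 0" using ordp_nonzero assms by blast
  show "\<not> f dvd 1" using ordp_nonunit[OF assms] by simp
  fix a b assume "f = a * b"
  then have "a * b = f" by simp
  then obtain x y where xy: "ordp x a" "ordp y b" using ordp_factor[OF _ assms] by blast
  have "ordp (x+y) f" using ordp_mult[OF xy] \<open>f = a * b\<close> by simp
  then have "x + y = 1" using assms ordp_unique by blast
  then have "x = 0 \<or> y = 0" by auto
  then show "a dvd 1 \<or> b dvd 1" using xy ordp0_unit by auto
qed

lemma xpow: "([:0,1:] :: 'a poly) ^ n = monom 1 n"
  by (metis monom_altdef smult_1_left)

lemma ordp_xpow: "ordp n ([:0,1:] ^ n)"
  unfolding xpow ordp_def using one_notin by auto


lemma lemmaE: assumes ps: "p * s = [:0,1:] ^ n" and pa: "ordp a p" and a2: "a \<ge> 2"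
  and sb: "ordp b s" and cond: "b < a \<or> coeff s (b - a) = 0"
  shows "\<not> irreducible p"
proof
  assume irr: "irreducible p"
  have "ordp (a+b) ([:0,1:]^n)" using ordp_mult[OF pa sb] ps by simp
  then have "a + b = n" using ordp_xpow ordp_unique by blast
  then have bn: "b \<noteq> n" using a2 by auto
  have rest: "(\<Sum>i\<in>{..b} - {0}. coeff p i * coeff s (b - i)) = 0"
  proof (rule sum.neutral, rule ballI)
    fix i assume i: "i \<in> {..b} - {0}"
    then have sM: "coeff s (b - i) \<in> M" using sb unfolding ordp_def by auto
    show "coeff p i * coeff s (b - i) = 0"
    proof (cases "i = a")
      case True
      then have "coeff s (b - i) = 0" using cond i by auto
      then show ?thesis by simp
    next
      case False
      then have "coeff p i \<in> M" using pa unfolding ordp_def by auto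
      then show ?thesis using sM sq by blast
    qed
  qed
  have "coeff (p * s) b = coeff p 0 * coeff s b + (\<Sum>i\<in>{..b} - {0}. coeff p i * coeff s (b - i))"
    unfolding coeff_mult by (subst sum.remove[of _ 0]) auto
  also have "\<dots> = coeff p 0 * coeff s b" using rest by simp
  finally have "coeff p 0 * coeff s b = 0" using ps bn by (simp add: xpow)
  moreover obtain t where "1 = coeff s b * t" using units sb unfolding ordp_def by (metis dvdE)
  ultimately have p0: "coeff p 0 = 0" by (metis mult.assoc mult_1_right mult_zero_left)
  obtain c q where pq: "p = pCons c q" by (cases p)
  then have c: "c = 0" using p0 by simp
  have "p = [:0,1:] * q" using pq c by simp
  moreover have "\<not> ([:0,1:] :: 'a poly) dvd 1" using ordp_nonunit[OF ordp_xpow[of 1]] by simp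
  moreover have "ordp (a - 1) q"
  proof -
    have "\<And>i. coeff q i = coeff p (Suc i)" using pq by simp
    moreover have "Suc (a - 1) = a" using a2 by simp
    ultimately show ?thesis using pa unfolding ordp_def by (metis Suc_inject)
  qed
  then have "\<not> q dvd 1" using ordp_nonunit a2 by auto
  ultimately show False using irr unfolding irreducible_def by blast
qed

lemma irred_x2c: assumes c: "c \<in> M" "c \<noteq> 0" shows "irreducible [:c, 0, 1:]"
  unfolding irreducible_def
proof (intro conjI allI impI)
  have o: "ordp 2 [:c, 0, 1:]" unfolding ordp_def using c one_notin
    by (auto simp: coeff_pCons split: nat.splits)
  show "[:c, 0, 1:] \<noteq> 0" by simp
  show "\<not> [:c, 0, 1:] dvd 1" using ordp_nonunit[OF o] by simp
  fix f g assume fg: "[:c, 0, 1:] = f * g"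
  then have "f * g = [:c, 0, 1:]" by simp
  then obtain x y where xy: "ordp x f" "ordp y g" using ordp_factor[OF _ o] by blast
  have "ordp (x+y) [:c, 0, 1:]" using ordp_mult[OF xy] fg by simp
  then have "x + y = 2" using o ordp_unique by blast
  show "f dvd 1 \<or> g dvd 1"
  proof (rule ccontr)
    assume "\<not> ?thesis"
    then have "x \<noteq> 0" "y \<noteq> 0" using xy ordp0_unit by (metis, metis)
    then have "x = 1" "y = 1" using \<open>x+y=2\<close> by auto
    then have "coeff f 0 \<in> M" "coeff g 0 \<in> M" using xy unfolding ordp_def by auto
    then have "coeff (f * g) 0 = 0" using sq by (simp add: coeff_mult)
    then show False using fg c by (metis coeff_pCons_0)
  qed
qed


lemma ord_mem: fixes ps :: "'a poly list" assumes irr: "\<forall>p\<in>set ps. irreducible p" and pr: "prod_list ps = [:0,1:]^n"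
  and p: "p \<in> set ps" shows "\<exists>e\<ge>1. ordp e p"
proof -
  have "p dvd [:0,1:]^n" using prod_list_dvd[OF p] pr by simp
  then obtain g where "[:0,1:]^n = p * g" by (rule dvdE)
  then have "p * g = [:0,1:]^n" by simp
  then obtain e b where e: "ordp e p" using ordp_factor[OF _ ordp_xpow] by blast
  have "\<not> p dvd 1" using irr p unfolding irreducible_def by blast
  have "e \<noteq> 0"
  proof
    assume "e = 0" with e have "ordp 0 p" by simp
    then show False using ordp0_unit \<open>\<not> p dvd 1\<close> by blast
  qed
  then show ?thesis using e by (intro exI[of _ e]) auto
qed

lemma prod_ord: fixes ps :: "'a poly list" shows "(\<forall>p\<in>set ps. \<exists>e\<ge>1. ordp e p) \<Longrightarrow> \<exists>e\<ge>length ps. ordp e (prod_list ps)"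
proof (induction ps)
  case Nil then show ?case using ordp_one by auto
next
  case (Cons a ps)
  then obtain e1 e2 where "e1 \<ge> 1" "ordp e1 a" "e2 \<ge> length ps" "ordp e2 (prod_list ps)" by auto
  then have "ordp (e1+e2) (prod_list (a#ps))" "e1 + e2 \<ge> length (a#ps)" using ordp_mult by auto
  then show ?case by blast
qed

lemma len_le: fixes ps :: "'a poly list" assumes irr: "\<forall>p\<in>set ps. irreducible p" and pr: "prod_list ps = [:0,1:]^n"
  shows "length ps \<le> n"
proof -
  obtain e where "e \<ge> length ps" "ordp e (prod_list ps)" using prod_ord ord_mem[OF irr pr] by metis
  then show ?thesis using pr ordp_xpow ordp_unique by metis
qed

lemma xpow_red: assumes "n \<ge> 2" shows "\<not> irreducible (([:0,1:] :: 'a poly)^n)"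
proof
  assume irr: "irreducible (([:0,1:] :: 'a poly)^n)"
  have "([:0,1:] :: 'a poly)^n = [:0,1:] * [:0,1:]^(n-1)" using assms
    by (metis Suc_diff_1 less_le_trans pos2 power_Suc)
  moreover have "\<not> ([:0,1:] :: 'a poly) dvd 1" using ordp_nonunit[OF ordp_xpow[of 1]] by simp
  moreover have "\<not> ([:0,1:] :: 'a poly)^(n-1) dvd 1" using ordp_nonunit[OF ordp_xpow[of "n-1"]] assms by simp
  ultimately show False using irr unfolding irreducible_def by blast
qed

lemma cnt2: assumes "irreducible p" "ordp a p" "ordp b q" "b < a" "p * q = [:0,1:]^n" "b \<ge> 1"
  shows False
  using lemmaE[OF assms(5,2) _ assms(3)] assms by auto

lemma cnt3: assumes "irreducible p" "ordp 2 p" "ordp 1 q" "ordp 1 r" "p * (q * r) = [:0,1:]^n"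
  shows False
proof -
  have "coeff (q*r) 0 = 0" using assms(3,4) sq unfolding ordp_def by (simp add: coeff_mult)
  moreover have "ordp 2 (q*r)" using ordp_mult[OF assms(3,4)] by (simp only: one_add_one)
  ultimately show False using lemmaE[OF assms(5,2) _ \<open>ordp 2 (q*r)\<close>] assms(1) by auto
qed

lemma cnt4: assumes "irreducible p" "ordp 2 p" "ordp 1 q" "ordp 1 r" "ordp 1 t"
  "p * (q * (r * t)) = [:0,1:]^n"
  shows False
proof -
  have rt0: "coeff (r*t) 0 = 0" using assms(4,5) sq unfolding ordp_def by (simp add: coeff_mult)
  have rt: "ordp 2 (r*t)" using ordp_mult[OF assms(4,5)] by (simp only: one_add_one)
  have "coeff (q*(r*t)) 1 = coeff q 0 * coeff (r*t) 1 + coeff q 1 * coeff (r*t) 0"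
    by (simp add: coeff_mult)
  also have "\<dots> = 0" using rt0 rt assms(3) sq unfolding ordp_def by simp
  finally have c1: "coeff (q*(r*t)) (3 - 2) = 0" by simp
  have "(1::nat) + 2 = 3" by simp
  then have "ordp 3 (q*(r*t))" using ordp_mult[OF assms(3) rt] by metis
  then show False using lemmaE[OF assms(6,2) _ \<open>ordp 3 (q*(r*t))\<close>] assms(1) c1 by auto
qed


lemma prod4: assumes "c \<in> M" shows "[:c,0,1:] * [:-c,0,1:] = ([:0,1:] :: 'a poly)^4"
proof -
  have "c * c = 0" using sq assms by blast
  then show ?thesis by (simp add: eval_nat_numeral)
qed

lemma x_irr: "irreducible ([:0,1:] :: 'a poly)"
  using ordp_irred1 ordp_xpow[of 1] by simp

lemma two: assumes "irreducible p" "irreducible q" "p * q = [:0,1:]^n"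
  shows "\<exists>a b. a \<ge> 1 \<and> b \<ge> 1 \<and> ordp a p \<and> ordp b q \<and> a + b = n"
proof -
  have i: "\<forall>x\<in>set [p,q]. irreducible x" and pr: "prod_list [p,q] = [:0,1:]^n" using assms by auto
  obtain a b where ab: "a \<ge> 1" "ordp a p" "b \<ge> 1" "ordp b q"
    using ord_mem[OF i pr, of p] ord_mem[OF i pr, of q] by auto
  have "ordp (a+b) ([:0,1:]^n)" using ordp_mult[OF ab(2,4)] assms(3) by simp
  then have "a + b = n" using ordp_xpow ordp_unique by blast
  then show ?thesis using ab by blast
qed

lemma three: assumes "irreducible p" "irreducible q" "irreducible r" "p * (q * r) = [:0,1:]^n"
  shows "\<exists>a b d. a \<ge> 1 \<and> b \<ge> 1 \<and> d \<ge> 1 \<and> ordp a p \<and> ordp b q \<and> ordp d r \<and> a + b + d = n"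
proof -
  have i: "\<forall>x\<in>set [p,q,r]. irreducible x" and pr: "prod_list [p,q,r] = [:0,1:]^n" using assms by auto
  obtain a b d where ab: "a \<ge> 1" "ordp a p" "b \<ge> 1" "ordp b q" "d \<ge> 1" "ordp d r"
    using ord_mem[OF i pr, of p] ord_mem[OF i pr, of q] ord_mem[OF i pr, of r] by auto
  have "ordp (a+(b+d)) ([:0,1:]^n)" using ordp_mult[OF ab(2) ordp_mult[OF ab(4,6)]] assms(4) by simp
  then have "a + (b + d) = n" using ordp_xpow ordp_unique by blast
  then show ?thesis using ab by (intro exI[of _ a] exI[of _ b] exI[of _ d]) auto
qed

lemma four: assumes "irreducible p" "irreducible q" "irreducible r" "irreducible t"
  "p * (q * (r * t)) = [:0,1:]^n"
  shows "\<exists>a b d e. a \<ge> 1 \<and> b \<ge> 1 \<and> d \<ge> 1 \<and> e \<ge> 1 \<and> ordp a p \<and> ordp b q \<and> ordp d r \<and> ordp e t \<and> a + b + d + e = n"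
proof -
  have i: "\<forall>x\<in>set [p,q,r,t]. irreducible x" and pr: "prod_list [p,q,r,t] = [:0,1:]^n" using assms by auto
  obtain a b d e where ab: "a \<ge> 1" "ordp a p" "b \<ge> 1" "ordp b q" "d \<ge> 1" "ordp d r" "e \<ge> 1" "ordp e t"
    using ord_mem[OF i pr, of p] ord_mem[OF i pr, of q] ord_mem[OF i pr, of r] ord_mem[OF i pr, of t] by auto
  have "ordp (a+(b+(d+e))) ([:0,1:]^n)" using ordp_mult[OF ab(2) ordp_mult[OF ab(4) ordp_mult[OF ab(6,8)]]] assms(5) by simp
  then have "a + (b + (d + e)) = n" using ordp_xpow ordp_unique by blast
  then show ?thesis using ab by (intro exI[of _ a] exI[of _ b] exI[of _ d] exI[of _ e]) auto
qed



lemma get_ps: assumes "k \<in> lengths (([:0,1:] :: 'a poly)^n)"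
  obtains ps :: "'a poly list" where "k > 0" "length ps = k" "\<forall>p\<in>set ps. irreducible p" "prod_list ps = [:0,1:]^n" "k \<le> n"
proof -
  from assms obtain ps :: "'a poly list" where h: "k > 0" "length ps = k" "\<forall>p\<in>set ps. irreducible p" "prod_list ps = [:0,1:]^n"
    unfolding lengths_def by blast
  have "k \<le> n" using len_le[OF h(3,4)] h(2) by simp
  then show ?thesis using that h by blast
qed

lemma in_len: assumes "\<forall>p\<in>set ps. irreducible p" "prod_list ps = f" "length ps = k" "k > 0"
  shows "k \<in> lengths f"
  using assms unfolding lengths_def by blast

lemma k1: assumes "k \<in> lengths (([:0,1:] :: 'a poly)^n)" "k = 1" "n \<ge> 2" shows False
proof -
  obtain ps :: "'a poly list" where h0: "k > 0" and h: "length ps = k" "\<forall>p\<in>set ps. irreducible p" "prod_list ps = [:0,1:]^n" and h4: "k \<le> n"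
    by (rule get_ps[OF assms(1)])
  then have "ps = [ps!0]" using len1 assms(2) by blast
  then have "ps!0 \<in> set ps" by (metis list.set_intros(1))
  then have "irreducible (ps!0)" using h(2) by blast
  moreover have "prod_list ps = ps!0" by (subst \<open>ps = [ps!0]\<close>) simp
  ultimately have "irreducible (([:0,1:] :: 'a poly)^n)" using h(3) by simp
  then show False using xpow_red assms(3) by blast
qed

lemma k2: assumes "k \<in> lengths (([:0,1:] :: 'a poly)^n)" "k = 2" "n = 3 \<or> n = 5" shows False
proof -
  obtain ps :: "'a poly list" where h0: "k > 0" and h: "length ps = k" "\<forall>p\<in>set ps. irreducible p" "prod_list ps = [:0,1:]^n" and h4: "k \<le> n"
    by (rule get_ps[OF assms(1)])
  then have e: "ps = [ps!0, ps!1]" using len2 assms(2) by blast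
  define p q where "p = ps!0" "q = ps!1"
  have "p \<in> set ps" "q \<in> set ps" using h(1) assms(2) unfolding p_q_def by auto
  then have ip: "irreducible p" "irreducible q" using h(2) by auto
  have "prod_list ps = p * q" unfolding p_q_def by (subst e) simp
  then have pq: "p * q = [:0,1:]^n" using h(3) by simp
  have qp: "q * p = [:0,1:]^n" using pq by (simp add: mult.commute)
  obtain a b where ab: "a \<ge> 1" "b \<ge> 1" "ordp a p" "ordp b q" "a + b = n" using two[OF ip pq] by blast
  show False
  proof (cases "b < a")
    case True show False by (rule cnt2[OF ip(1) ab(3,4) True pq ab(2)])
  next
    case False
    then have "a < b" using ab(5) assms(3) by presburger
    then show False using cnt2[OF ip(2) ab(4,3) _ qp ab(1)] by blast
  qed
qed

lemma k3: assumes "k \<in> lengths (([:0,1:] :: 'a poly)^4)" "k = 3" shows False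
proof -
  obtain ps :: "'a poly list" where h0: "k > 0" and h: "length ps = k" "\<forall>p\<in>set ps. irreducible p" "prod_list ps = [:0,1:]^4" and h4: "k \<le> 4"
    by (rule get_ps[OF assms(1)])
  then have e: "ps = [ps!0, ps!1, ps!2]" using len3 assms(2) by blast
  define p q r where "p = ps!0" "q = ps!1" "r = ps!2"
  have "p \<in> set ps" "q \<in> set ps" "r \<in> set ps" using h(1) assms(2) unfolding p_q_r_def by auto
  then have ip: "irreducible p" "irreducible q" "irreducible r" using h(2) by auto
  have "prod_list ps = p * (q * r)" unfolding p_q_r_def by (subst e) simp
  then have pq: "p * (q * r) = [:0,1:]^4" using h(3) by simp
  obtain a b d where ab: "a \<ge> 1" "b \<ge> 1" "d \<ge> 1" "ordp a p" "ordp b q" "ordp d r" "a + b + d = 4"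
    using three[OF ip pq] by blast
  have "(a = 2 \<and> b = 1 \<and> d = 1) \<or> (a = 1 \<and> b = 2 \<and> d = 1) \<or> (a = 1 \<and> b = 1 \<and> d = 2)" using ab(1-3,7) by presburger
  then show False
  proof (elim disjE)
    assume 1: "a = 2 \<and> b = 1 \<and> d = 1"
    from 1 have o: "ordp 2 p" "ordp 1 q" "ordp 1 r" using ab by auto
    show False by (rule cnt3[OF ip(1) o pq])
  next
    assume 2: "a = 1 \<and> b = 2 \<and> d = 1"
    from 2 have o: "ordp 2 q" "ordp 1 p" "ordp 1 r" using ab by auto
    have "q * (p * r) = [:0,1:]^4" using pq by (simp add: ac_simps)
    then show False by (rule cnt3[OF ip(2) o])
  next
    assume 3: "a = 1 \<and> b = 1 \<and> d = 2"
    from 3 have o: "ordp 2 r" "ordp 1 p" "ordp 1 q" using ab by auto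
    have "r * (p * q) = [:0,1:]^4" using pq by (simp add: ac_simps)
    then show False by (rule cnt3[OF ip(3) o])
  qed
qed

lemma k4: assumes "k \<in> lengths (([:0,1:] :: 'a poly)^5)" "k = 4" shows False
proof -
  obtain ps :: "'a poly list" where h0: "k > 0" and h: "length ps = k" "\<forall>p\<in>set ps. irreducible p" "prod_list ps = [:0,1:]^5" and h4: "k \<le> 5"
    by (rule get_ps[OF assms(1)])
  then have e: "ps = [ps!0, ps!1, ps!2, ps!3]" using len4 assms(2) by blast
  define p q r t where "p = ps!0" "q = ps!1" "r = ps!2" "t = ps!3"
  have "p \<in> set ps" "q \<in> set ps" "r \<in> set ps" "t \<in> set ps" using h(1) assms(2) unfolding p_q_r_t_def by auto
  then have ip: "irreducible p" "irreducible q" "irreducible r" "irreducible t" using h(2) by auto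
  have "prod_list ps = p * (q * (r * t))" unfolding p_q_r_t_def by (subst e) simp
  then have pq: "p * (q * (r * t)) = [:0,1:]^5" using h(3) by simp
  obtain a b d f where ab: "a \<ge> 1" "b \<ge> 1" "d \<ge> 1" "f \<ge> 1" "ordp a p" "ordp b q" "ordp d r" "ordp f t" "a + b + d + f = 5"
    using four[OF ip pq] by blast
  have "(a = 2 \<and> b = 1 \<and> d = 1 \<and> f = 1) \<or> (a = 1 \<and> b = 2 \<and> d = 1 \<and> f = 1) \<or> (a = 1 \<and> b = 1 \<and> d = 2 \<and> f = 1) \<or> (a = 1 \<and> b = 1 \<and> d = 1 \<and> f = 2)" using ab(1-4,9) by presburger
  then show False
  proof (elim disjE)
    assume 1: "a = 2 \<and> b = 1 \<and> d = 1 \<and> f = 1"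
    from 1 have o: "ordp 2 p" "ordp 1 q" "ordp 1 r" "ordp 1 t" using ab by auto
    show False by (rule cnt4[OF ip(1) o pq])
  next
    assume 2: "a = 1 \<and> b = 2 \<and> d = 1 \<and> f = 1"
    from 2 have o: "ordp 2 q" "ordp 1 p" "ordp 1 r" "ordp 1 t" using ab by auto
    have "q * (p * (r * t)) = [:0,1:]^5" using pq by (simp add: ac_simps)
    then show False by (rule cnt4[OF ip(2) o])
  next
    assume 3: "a = 1 \<and> b = 1 \<and> d = 2 \<and> f = 1"
    from 3 have o: "ordp 2 r" "ordp 1 p" "ordp 1 q" "ordp 1 t" using ab by auto
    have "r * (p * (q * t)) = [:0,1:]^5" using pq by (simp add: ac_simps)
    then show False by (rule cnt4[OF ip(3) o])
  next
    assume 4: "a = 1 \<and> b = 1 \<and> d = 1 \<and> f = 2"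
    from 4 have o: "ordp 2 t" "ordp 1 p" "ordp 1 q" "ordp 1 r" using ab by auto
    have "t * (p * (q * r)) = [:0,1:]^5" using pq by (simp add: ac_simps)
    then show False by (rule cnt4[OF ip(4) o])
  qed
qed


lemma rep_in: "n > 0 \<Longrightarrow> n \<in> lengths (([:0,1:]::'a poly)^n)"
  using in_len[of "replicate n [:0,1:]" "[:0,1:]^n" n] x_irr by (simp add: prod_list_replicate)

lemma bound: assumes "k \<in> lengths (([:0,1:]::'a poly)^n)" shows "0 < k" "k \<le> n"
  using get_ps[OF assms] by metis+

lemma all_lengths: assumes c: "c \<in> M" "c \<noteq> 0"
  shows "lengths ([:0, 1:] :: 'a poly) = {1} \<and>
         lengths ([:0, 1:] ^ 2 :: 'a poly) = {2} \<and>
         lengths ([:0, 1:] ^ 3 :: 'a poly) = {3} \<and>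
         lengths ([:0, 1:] ^ 4 :: 'a poly) = {2, 4} \<and>
         lengths ([:0, 1:] ^ 5 :: 'a poly) = {3, 5}"
proof (intro conjI)
  have nc: "-c \<in> M" "-c \<noteq> 0" using c neg_in by auto
  have q1: "irreducible [:c,0,1:]" and q2: "irreducible [:-c,0,1:]" using irred_x2c c nc by auto
  have p4: "[:c,0,1:] * [:-c,0,1:] = ([:0,1:] :: 'a poly)^4" using prod4 c by blast
  have w4: "2 \<in> lengths (([:0,1:] :: 'a poly)^4)"
    by (rule in_len[of "[[:c,0,1:], [:-c,0,1:]]"]) (use q1 q2 p4 in auto)
  have "[:0,1:] * ([:c,0,1:] * [:-c,0,1:]) = ([:0,1:] :: 'a poly)^5" unfolding p4 using power_Suc[of "[:0,1:]::'a poly" 4] by (simp del: power_Suc)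
  then have w5: "3 \<in> lengths (([:0,1:] :: 'a poly)^5)"
    by (intro in_len[of "[[:0,1:], [:c,0,1:], [:-c,0,1:]]"]) (use q1 q2 x_irr in auto)
  have "lengths (([:0,1:] :: 'a poly)^1) = {1}"
  proof (rule set_eqI, rule iffI)
    fix k assume k: "k \<in> lengths (([:0,1:] :: 'a poly)^1)"
    show "k \<in> {1}" using bound[OF k] by auto
  qed (use rep_in[of 1] in auto)
  then show "lengths ([:0, 1:] :: 'a poly) = {1}" by simp
  show "lengths ([:0, 1:] ^ 2 :: 'a poly) = {2}"
  proof (rule set_eqI, rule iffI)
    fix k assume k: "k \<in> lengths (([:0,1:] :: 'a poly)^2)"
    have "k \<noteq> 1" using k1[OF k] by auto
    then show "k \<in> {2}" using bound[OF k] by auto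
  qed (use rep_in[of 2] in auto)
  show "lengths ([:0, 1:] ^ 3 :: 'a poly) = {3}"
  proof (rule set_eqI, rule iffI)
    fix k assume k: "k \<in> lengths (([:0,1:] :: 'a poly)^3)"
    have "k \<noteq> 1" "k \<noteq> 2" using k1[OF k] k2[OF k] by auto
    then show "k \<in> {3}" using bound[OF k] by auto
  qed (use rep_in[of 3] in auto)
  show "lengths ([:0, 1:] ^ 4 :: 'a poly) = {2, 4}"
  proof (rule set_eqI, rule iffI)
    fix k assume k: "k \<in> lengths (([:0,1:] :: 'a poly)^4)"
    have "k \<noteq> 1" "k \<noteq> 3" using k1[OF k] k3[OF k] by auto
    then show "k \<in> {2, 4}" using bound[OF k] by auto
  qed (use rep_in[of 4] w4 in auto)
  show "lengths ([:0, 1:] ^ 5 :: 'a poly) = {3, 5}"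
  proof (rule set_eqI, rule iffI)
    fix k assume k: "k \<in> lengths (([:0,1:] :: 'a poly)^5)"
    have "k \<noteq> 1" "k \<noteq> 2" "k \<noteq> 4" using k1[OF k] k2[OF k] k4[OF k] by auto
    then show "k \<in> {3, 5}" using bound[OF k] by auto
  qed (use rep_in[of 5] w5 in auto)
qed

end

lemma ideal_one: "is_ideal I \<Longrightarrow> 1 \<in> I \<Longrightarrow> I = UNIV"
  unfolding is_ideal_def by (metis UNIV_eq_I mult_1_right)

lemma local_units:
  fixes M :: "'a::comm_ring_1 set"
  assumes uniq: "\<And>J. maximal_ideal J \<Longrightarrow> J = M" and a: "a \<notin> M"
  shows "a dvd 1"
proof (rule ccontr)
  assume na: "\<not> a dvd 1"
  define A where "A = {I :: 'a set. is_ideal I \<and> (\<forall>r. a * r \<in> I) \<and> 1 \<notin> I}"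
  have "\<forall>C\<in>chains A. \<exists>U\<in>A. \<forall>X\<in>C. X \<subseteq> U"
  proof
    fix C assume C: "C \<in> chains A"
    show "\<exists>U\<in>A. \<forall>X\<in>C. X \<subseteq> U"
    proof (cases "C = {}")
      case True
      have "range (\<lambda>r. a * r) \<in> A" unfolding A_def is_ideal_def
      proof (intro CollectI conjI ballI allI)
        have "0 = a * 0" by simp
        then show "0 \<in> range ((*) a)" by blast
        fix x y assume "x \<in> range ((*) a)" "y \<in> range ((*) a)"
        then obtain u v where "x = a * u" "y = a * v" by auto
        then have "x + y = a * (u + v)" by (simp add: distrib_left)
        then show "x + y \<in> range ((*) a)" by blast
      next
        fix r x assume "x \<in> range ((*) a)"
        then obtain u where "x = a * u" by auto
        then have "r * x = a * (r * u)" by (simp add: ac_simps)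
        then show "r * x \<in> range ((*) a)" by blast
      next
        fix r show "a * r \<in> range ((*) a)" by simp
      next
        show "1 \<notin> range ((*) a)"
        proof
          assume "1 \<in> range ((*) a)"
          then obtain u where "1 = a * u" by auto
          then show False using na by (auto intro: dvdI)
        qed
      qed
      then show ?thesis using True by blast
    next
      case False
      have sub: "C \<subseteq> A" and ch: "\<And>X Y. X \<in> C \<Longrightarrow> Y \<in> C \<Longrightarrow> X \<subseteq> Y \<or> Y \<subseteq> X"
        using C unfolding chains_def chain_subset_def by auto
      have "\<Union>C \<in> A" unfolding A_def is_ideal_def
      proof (intro CollectI conjI ballI allI)
        obtain X0 where X0: "X0 \<in> C" using False by blast
        then have "X0 \<in> A" using sub by blast
        then show "0 \<in> \<Union>C" using X0 unfolding A_def is_ideal_def by blast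
        fix r show "a * r \<in> \<Union>C" using \<open>X0 \<in> A\<close> X0 unfolding A_def by blast
      next
        fix x y assume "x \<in> \<Union>C" "y \<in> \<Union>C"
        then obtain X Y where XY: "X \<in> C" "Y \<in> C" "x \<in> X" "y \<in> Y" by blast
        show "x + y \<in> \<Union>C"
        proof (cases "X \<subseteq> Y")
          case True
          then have "x \<in> Y" "Y \<in> A" using XY sub by auto
          then show ?thesis using XY unfolding A_def is_ideal_def by blast
        next
          case False
          then have "Y \<subseteq> X" using ch XY by blast
          then have "y \<in> X" "X \<in> A" using XY sub by auto
          then show ?thesis using XY unfolding A_def is_ideal_def by blast
        qed
      next
        fix r x assume "x \<in> \<Union>C"
        then obtain X where "X \<in> C" "x \<in> X" by blast
        then show "r * x \<in> \<Union>C" using sub unfolding A_def is_ideal_def by blast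
      next
        show "1 \<notin> \<Union>C" using sub unfolding A_def by blast
      qed
      then show ?thesis by blast
    qed
  qed
  then obtain N where N: "N \<in> A" and Nmax: "\<forall>X\<in>A. N \<subseteq> X \<longrightarrow> X = N"
    using Zorn_Lemma2[of A] by blast
  have "maximal_ideal N" unfolding maximal_ideal_def
  proof (intro conjI allI impI)
    show "is_ideal N" using N A_def by blast
    show "N \<noteq> UNIV" using N A_def by blast
    fix J assume J: "is_ideal J \<and> N \<subseteq> J"
    show "J = N \<or> J = UNIV"
    proof (cases "1 \<in> J")
      case True then show ?thesis using ideal_one J by blast
    next
      case False
      then have "J \<in> A" using J N unfolding A_def by blast
      then show ?thesis using Nmax J by blast
    qed
  qed
  then have "N = M" using uniq by blast
  moreover have "a \<in> N" proof -
    have "a * 1 \<in> N" using N unfolding A_def by blast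
    then show ?thesis by simp
  qed
  ultimately show False using a by blast
qed

theorem proposition4p6:
  assumes "artinian_ring TYPE('a::comm_ring_1)"
    and "local_ring TYPE('a)"
    and "max_ideal TYPE('a) \<noteq> {0}"
    and "\<forall>a\<in>max_ideal TYPE('a). \<forall>b\<in>max_ideal TYPE('a). a * b = 0"
  shows "lengths ([:0, 1:] :: 'a poly) = {1} \<and>
         lengths ([:0, 1:] ^ 2 :: 'a poly) = {2} \<and>
         lengths ([:0, 1:] ^ 3 :: 'a poly) = {3} \<and>
         lengths ([:0, 1:] ^ 4 :: 'a poly) = {2, 4} \<and>
         lengths ([:0, 1:] ^ 5 :: 'a poly) = {3, 5}"
proof -
  define M where "M = max_ideal TYPE('a)"
  have ex1: "\<exists>!J :: 'a set. maximal_ideal J" using assms(2) unfolding local_ring_def .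
  have mM: "maximal_ideal M" unfolding M_def max_ideal_def by (rule theI'[OF ex1])
  have uniq: "\<And>J. maximal_ideal J \<Longrightarrow> J = M" using ex1 mM by blast
  have idM: "is_ideal M" and nU: "M \<noteq> UNIV" using mM unfolding maximal_ideal_def by auto
  have one: "1 \<notin> M" using ideal_one[OF idM] nU by blast
  interpret lr M
  proof
    show "is_ideal M" by (rule idM)
    show "1 \<notin> M" by (rule one)
    show "\<And>a. a \<notin> M \<Longrightarrow> a dvd 1" using local_units uniq by blast
    show "\<And>a b. a \<in> M \<Longrightarrow> b \<in> M \<Longrightarrow> a * b = 0" using assms(4) M_def by blast
  qed
  obtain c where "c \<in> M" "c \<noteq> 0" using assms(3) zero_in M_def by blast
  then show ?thesis by (rule all_lengths)
qed

end
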